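(* Let $\theta:H\to H$ be an endomorphism and $E$ an $n$-ary Endo-primary hyperideal of $H$ associated with $\theta$. Then $rad(E)$ is an $n$-ary Endo-prime hyperideal associated with $\theta$.
   Context: Throughout, $(H,h,k)$ is a commutative Krasner $(m,n)$-hyperring with scalar identity $1_H$: $(H,h)$ is a canonical $m$-ary hypergroup (a commutative associative $m$-ary hyperoperation $h:H^m\to\mathcal P^*(H)$ with a unique zero $0$ such that $h(u,0^{(m-1)})=\{u\}$, unique inverses, reversibility), $k:H^n\to H$ is a commutative associative $n$-ary operation distributing over $h$ in each argument, $k(0,u_2^n)=0$, and $k(u,1_H^{(n-1)})=u$ for all $u$. Notation: $u_i^j$ denotes $u_i,\dots,u_j$ (empty if $j<i$); $u^{(t)}$ denotes $u$ repeated $t$ times; for $r=l(n-1)+1$, $k_{(l)}(u_1^r)=k(k(\cdots k(k(u_1^n),u_{n+1}^{2n-1})\cdots),u_{r-n+1}^{r})$. A hyperideal is a nonempty $I\subseteq H$ such that $(I,h)$ is an $m$-ary subhypergroup and $k(u_1^{i-1},I,u_{i+1}^n)\subseteq I$ for all $u_j\in H$. An endomorphism is a map $\theta$ with $\theta(h(u_1^m))=h(\theta(u_1),\dots,\theta(u_m))$, $\theta(k(u_1^n))=k(\theta(u_1),\dots,\theta(u_n))$, $\theta(1_H)=1_H$. $rad(E)$ is the intersection of all $n$-ary prime hyperideals (proper hyperideals $P$ with $k(u_1^n)\in P\Rightarrow$ some $u_i\in P$) containing $E$; equivalently the set of $u$ with $k(u^{(r)},1_H^{(n-r)})\in E$ for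 some $r\le n$ or $k_{(l)}(u^{(r)})\in E$ for some $r=l(n-1)+1>n$. A proper hyperideal $E$ is an $n$-ary Endo-prime hyperideal associated with $\theta$ if for all $u_1,\dots,u_n\in H$, $k(u_1^n)\in E$ implies that for some $i$, $u_i\in E$ or $\theta\big(k(u_1^{i-1},1_H,u_{i+1}^n)\big)\in E$; it is an $n$-ary Endo-primary hyperideal associated with $\theta$ if $k(u_1^n)\in E$ implies that for some $i$, $u_i\in E$ or $\theta\big(k(u_1^{i-1},1_H,u_{i+1}^n)\big)\in rad(E)$. *)

theory Defs
  imports Main "HOL-Library.Multiset"
begin

text \<open>The carrier H is the whole type 'a.
  The m-ary hyperoperation h and the n-ary operation k take lists; they are only
  meaningful on lists of length m resp. n. Argument lists are 0-indexed.\<close>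

definition sing :: "'a \<Rightarrow> 'a set" where "sing x = {x}"

definition hset :: "('a list \<Rightarrow> 'a set) \<Rightarrow> 'a set list \<Rightarrow> 'a set" where
  "hset h As = \<Union> {h xs | xs. list_all2 (\<in>) xs As}"

definition neg_of :: "nat \<Rightarrow> ('a list \<Rightarrow> 'a set) \<Rightarrow> 'a \<Rightarrow> 'a \<Rightarrow> 'a" where
  "neg_of m h z x = (THE y. z \<in> h (x # y # replicate (m - 2) z))"

definition canonical_hypergroup :: "nat \<Rightarrow> ('a list \<Rightarrow> 'a set) \<Rightarrow> 'a \<Rightarrow> bool" where
  "canonical_hypergroup m h z \<longleftrightarrow>
     2 \<le> m \<and>
     (\<forall>xs. length xs = m \<longrightarrow> h xs \<noteq> {}) \<and>
     \<comment> \<open>associativity\<close>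
     (\<forall>xs i. length xs = 2 * m - 1 \<and> i < m \<longrightarrow>
        hset h (map sing (take i xs) @ [h (take m (drop i xs))] @ map sing (drop (i + m) xs))
        = hset h ([h (take m xs)] @ map sing (drop m xs))) \<and>
     \<comment> \<open>commutativity\<close>
     (\<forall>xs ys. length xs = m \<and> mset xs = mset ys \<longrightarrow> h xs = h ys) \<and>
     \<comment> \<open>unique zero\<close>
     (\<forall>x. h (x # replicate (m - 1) z) = {x}) \<and>
     (\<forall>z'. (\<forall>x. h (x # replicate (m - 1) z') = {x}) \<longrightarrow> z' = z) \<and>
     \<comment> \<open>unique inverses\<close>
     (\<forall>x. \<exists>!y. z \<in> h (x # y # replicate (m - 2) z)) \<and>
     \<comment> \<open>reversibility (for every position, using commutativity to put it first)\<close>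
     (\<forall>x xs i. length xs = m \<and> i < m \<and> x \<in> h xs \<longrightarrow>
        xs ! i \<in> h ((map (neg_of m h z) xs)[i := x]))"

definition krasner_hyperring ::
  "nat \<Rightarrow> nat \<Rightarrow> ('a list \<Rightarrow> 'a set) \<Rightarrow> ('a list \<Rightarrow> 'a) \<Rightarrow> 'a \<Rightarrow> 'a \<Rightarrow> bool" where
  "krasner_hyperring m n h k z one \<longleftrightarrow>
     canonical_hypergroup m h z \<and> 2 \<le> n \<and>
     \<comment> \<open>k commutative\<close>
     (\<forall>xs ys. length xs = n \<and> mset xs = mset ys \<longrightarrow> k xs = k ys) \<and>
     \<comment> \<open>k associative\<close>
     (\<forall>xs i. length xs = 2 * n - 1 \<and> i < n \<longrightarrow>
        k (take i xs @ [k (take n (drop i xs))] @ drop (i + n) xs)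
        = k (k (take n xs) # drop n xs)) \<and>
     \<comment> \<open>k distributes over h in each argument\<close>
     (\<forall>xs ys i. length xs = n - 1 \<and> length ys = m \<and> i < n \<longrightarrow>
        (\<lambda>a. k (take i xs @ a # drop i xs)) ` h ys
        = h (map (\<lambda>y. k (take i xs @ y # drop i xs)) ys)) \<and>
     \<comment> \<open>zero is absorbing\<close>
     (\<forall>xs. length xs = n - 1 \<longrightarrow> k (z # xs) = z) \<and>
     \<comment> \<open>scalar identity\<close>
     (\<forall>x. k (x # replicate (n - 1) one) = x)"

definition subhypergroup :: "nat \<Rightarrow> ('a list \<Rightarrow> 'a set) \<Rightarrow> 'a set \<Rightarrow> bool" where
  "subhypergroup m h I \<longleftrightarrow>
     I \<noteq> {} \<and>
     (\<forall>xs. length xs = m \<and> set xs \<subseteq> I \<longrightarrow> h xs \<subseteq> I) \<and>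
     (\<forall>xs i. length xs = m - 1 \<and> set xs \<subseteq> I \<and> i < m \<longrightarrow>
        hset h (map sing (take i xs) @ [I] @ map sing (drop i xs)) = I)"

definition hyperideal ::
  "nat \<Rightarrow> nat \<Rightarrow> ('a list \<Rightarrow> 'a set) \<Rightarrow> ('a list \<Rightarrow> 'a) \<Rightarrow> 'a set \<Rightarrow> bool" where
  "hyperideal m n h k I \<longleftrightarrow>
     subhypergroup m h I \<and>
     (\<forall>xs i a. length xs = n \<and> i < n \<and> a \<in> I \<longrightarrow> k (xs[i := a]) \<in> I)"

definition n_prime ::
  "nat \<Rightarrow> nat \<Rightarrow> ('a list \<Rightarrow> 'a set) \<Rightarrow> ('a list \<Rightarrow> 'a) \<Rightarrow> 'a set \<Rightarrow> bool" where
  "n_prime m n h k P \<longleftrightarrow>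
     hyperideal m n h k P \<and> P \<noteq> UNIV \<and>
     (\<forall>xs. length xs = n \<and> k xs \<in> P \<longrightarrow> (\<exists>i<n. xs ! i \<in> P))"

definition rad ::
  "nat \<Rightarrow> nat \<Rightarrow> ('a list \<Rightarrow> 'a set) \<Rightarrow> ('a list \<Rightarrow> 'a) \<Rightarrow> 'a set \<Rightarrow> 'a set" where
  "rad m n h k E = \<Inter> {P. n_prime m n h k P \<and> E \<subseteq> P}"

definition endomorphism ::
  "nat \<Rightarrow> nat \<Rightarrow> ('a list \<Rightarrow> 'a set) \<Rightarrow> ('a list \<Rightarrow> 'a) \<Rightarrow> 'a \<Rightarrow> ('a \<Rightarrow> 'a) \<Rightarrow> bool" where
  "endomorphism m n h k one \<theta> \<longleftrightarrow>
     (\<forall>xs. length xs = m \<longrightarrow> \<theta> ` h xs = h (map \<theta> xs)) \<and>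
     (\<forall>xs. length xs = n \<longrightarrow> \<theta> (k xs) = k (map \<theta> xs)) \<and>
     \<theta> one = one"

definition endo_prime ::
  "nat \<Rightarrow> nat \<Rightarrow> ('a list \<Rightarrow> 'a set) \<Rightarrow> ('a list \<Rightarrow> 'a) \<Rightarrow> 'a \<Rightarrow> ('a \<Rightarrow> 'a) \<Rightarrow> 'a set \<Rightarrow> bool" where
  "endo_prime m n h k one \<theta> E \<longleftrightarrow>
     hyperideal m n h k E \<and> E \<noteq> UNIV \<and>
     (\<forall>xs. length xs = n \<and> k xs \<in> E \<longrightarrow>
        (\<exists>i<n. xs ! i \<in> E \<or> \<theta> (k (xs[i := one])) \<in> E))"

definition endo_primary ::
  "nat \<Rightarrow> nat \<Rightarrow> ('a list \<Rightarrow> 'a set) \<Rightarrow> ('a list \<Rightarrow> 'a) \<Rightarrow> 'a \<Rightarrow> ('a \<Rightarrow> 'a) \<Rightarrow> 'a set \<Rightarrow> bool" where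
  "endo_primary m n h k one \<theta> E \<longleftrightarrow>
     hyperideal m n h k E \<and> E \<noteq> UNIV \<and>
     (\<forall>xs. length xs = n \<and> k xs \<in> E \<longrightarrow>
        (\<exists>i<n. xs ! i \<in> E \<or> \<theta> (k (xs[i := one])) \<in> rad m n h k E))"

end

theory Submission imports Defs begin

locale km =
  fixes m n :: nat and h :: "'a list \<Rightarrow> 'a set" and k :: "'a list \<Rightarrow> 'a" and z one :: 'a
  assumes KH: "krasner_hyperring m n h k z one"
begin

lemma KHu: "(2 \<le> m \<and>
     (\<forall>xs. length xs = m \<longrightarrow> h xs \<noteq> {}) \<and>
     (\<forall>xs i. length xs = 2 * m - 1 \<and> i < m \<longrightarrow>
        hset h (map sing (take i xs) @ [h (take m (drop i xs))] @ map sing (drop (i + m) xs))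
        = hset h ([h (take m xs)] @ map sing (drop m xs))) \<and>
     (\<forall>xs ys. length xs = m \<and> mset xs = mset ys \<longrightarrow> h xs = h ys) \<and>
     (\<forall>x. h (x # replicate (m - 1) z) = {x}) \<and>
     (\<forall>z'. (\<forall>x. h (x # replicate (m - 1) z') = {x}) \<longrightarrow> z' = z) \<and>
     (\<forall>x. \<exists>!y. z \<in> h (x # y # replicate (m - 2) z)) \<and>
     (\<forall>x xs i. length xs = m \<and> i < m \<and> x \<in> h xs \<longrightarrow>
        xs ! i \<in> h ((map (neg_of m h z) xs)[i := x]))) \<and> 2 \<le> n \<and>
     (\<forall>xs ys. length xs = n \<and> mset xs = mset ys \<longrightarrow> k xs = k ys) \<and>
     (\<forall>xs i. length xs = 2 * n - 1 \<and> i < n \<longrightarrow>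
        k (take i xs @ [k (take n (drop i xs))] @ drop (i + n) xs)
        = k (k (take n xs) # drop n xs)) \<and>
     (\<forall>xs ys i. length xs = n - 1 \<and> length ys = m \<and> i < n \<longrightarrow>
        (\<lambda>a. k (take i xs @ a # drop i xs)) ` h ys
        = h (map (\<lambda>y. k (take i xs @ y # drop i xs)) ys)) \<and>
     (\<forall>xs. length xs = n - 1 \<longrightarrow> k (z # xs) = z) \<and>
     (\<forall>x. k (x # replicate (n - 1) one) = x)"
  using KH unfolding krasner_hyperring_def canonical_hypergroup_def .

lemma m2: "2 \<le> m" using KHu by (elim conjE)
lemma n2: "2 \<le> n" using KHu by (elim conjE)
lemma hne0: "\<forall>xs. length xs = m \<longrightarrow> h xs \<noteq> {}" using KHu by (elim conjE)
lemma hcomm0: "\<forall>xs ys. length xs = m \<and> mset xs = mset ys \<longrightarrow> h xs = h ys" using KHu by (elim conjE)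
lemma hzero0: "\<forall>x. h (x # replicate (m - 1) z) = {x}" using KHu by (elim conjE)
lemma hinv0: "\<forall>x. \<exists>!y. z \<in> h (x # y # replicate (m - 2) z)" using KHu by (elim conjE)
lemma hrev0: "\<forall>x xs i. length xs = m \<and> i < m \<and> x \<in> h xs \<longrightarrow>
        xs ! i \<in> h ((map (neg_of m h z) xs)[i := x])" using KHu by (elim conjE)
lemma kcomm0: "\<forall>xs ys. length xs = n \<and> mset xs = mset ys \<longrightarrow> k xs = k ys" using KHu by (elim conjE)
lemma kassoc0: "\<forall>xs i. length xs = 2 * n - 1 \<and> i < n \<longrightarrow>
        k (take i xs @ [k (take n (drop i xs))] @ drop (i + n) xs)
        = k (k (take n xs) # drop n xs)" using KHu by (elim conjE)
lemma kdist0: "\<forall>xs ys i. length xs = n - 1 \<and> length ys = m \<and> i < n \<longrightarrow>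
        (\<lambda>a. k (take i xs @ a # drop i xs)) ` h ys
        = h (map (\<lambda>y. k (take i xs @ y # drop i xs)) ys)" using KHu by (elim conjE)
lemma kzero0: "\<forall>xs. length xs = n - 1 \<longrightarrow> k (z # xs) = z" using KHu by (elim conjE)
lemma kone0: "\<forall>x. k (x # replicate (n - 1) one) = x" using KHu by (elim conjE)

lemma hne: "length xs = m \<Longrightarrow> h xs \<noteq> {}" using hne0 by blast
lemma hcomm: "length xs = m \<Longrightarrow> mset xs = mset ys \<Longrightarrow> h xs = h ys" using hcomm0 by blast
lemma hzero: "h (x # replicate (m - 1) z) = {x}" using hzero0 by blast
lemma hinv: "\<exists>!y. z \<in> h (x # y # replicate (m - 2) z)" using hinv0 by blast
lemma hrev: "length xs = m \<Longrightarrow> i < m \<Longrightarrow> x \<in> h xs \<Longrightarrow>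
        xs ! i \<in> h ((map (neg_of m h z) xs)[i := x])" using hrev0 by blast
lemma kcomm: "length xs = n \<Longrightarrow> mset xs = mset ys \<Longrightarrow> k xs = k ys" using kcomm0 by blast
lemma kassoc: "length xs = 2 * n - 1 \<Longrightarrow> i < n \<Longrightarrow>
        k (take i xs @ [k (take n (drop i xs))] @ drop (i + n) xs)
        = k (k (take n xs) # drop n xs)" using kassoc0 by blast
lemma kdist: "length xs = n - 1 \<Longrightarrow> length ys = m \<Longrightarrow> i < n \<Longrightarrow>
        (\<lambda>a. k (take i xs @ a # drop i xs)) ` h ys
        = h (map (\<lambda>y. k (take i xs @ y # drop i xs)) ys)" using kdist0 by blast
lemma kzero: "length xs = n - 1 \<Longrightarrow> k (z # xs) = z" using kzero0 by blast
lemma kone: "k (x # replicate (n - 1) one) = x" using kone0 by blast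

lemma rep1: "x # replicate (n - 2) x = replicate (n - 1) x"
proof -
  have "n - 1 = Suc (n - 2)" using n2 by arith
  then show ?thesis by simp
qed

definition mul where "mul x y = k (x # y # replicate (n - 2) one)"
definition K where "K ys = k (ys @ replicate (n - length ys) one)"
definition prd where "prd xs = foldr mul xs one"
definition pw where "pw x j = prd (replicate j x)"
abbreviation neg where "neg \<equiv> neg_of m h z"

lemma mul_comm: "mul x y = mul y x"
  unfolding mul_def by (rule kcomm) (use n2 in auto)

lemma mul_one: "mul x one = x"
proof -
  have "x # one # replicate (n - 2) one = x # replicate (n - 1) one"
    by (simp add: rep1)
  then show ?thesis unfolding mul_def using kone by simp
qed

lemma K_cons:
  assumes "length ys < n"
  shows "K (x # ys) = mul x (K ys)"
proof -
  let ?l = "length ys"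
  define L where "L = x # (ys @ replicate (n - ?l) one) @ replicate (n - 2) one"
  have len: "length L = 2 * n - 1" using n2 assms by (simp add: L_def)
  have e1: "take 1 L = [x]" by (simp add: L_def)
  have e2: "take n (drop 1 L) = ys @ replicate (n - ?l) one" using assms by (simp add: L_def)
  have e3: "drop (1 + n) L = replicate (n - 2) one" using assms by (simp add: L_def)
  have e4: "take n L = x # ys @ replicate (n - 1 - ?l) one"
    using assms n2 by (cases n) (auto simp: L_def min_def)
  have e5: "drop n L = replicate (n - 1) one"
  proof -
    have "drop n L = drop (n - 1) (ys @ replicate (n - ?l) one @ replicate (n - 2) one)"
      using n2 by (cases n) (auto simp: L_def)
    also have "\<dots> = drop (n - 1 - ?l) (replicate (n - ?l) one) @ replicate (n - 2) one"
      using assms by simp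
    also have "\<dots> = replicate (n - 1) one"
    proof -
      have "n - ?l - (n - 1 - ?l) = 1" using assms n2 by arith
      then show ?thesis using rep1 by simp
    qed
    finally show ?thesis .
  qed
  have "k (take 1 L @ [k (take n (drop 1 L))] @ drop (1 + n) L) = k (k (take n L) # drop n L)"
    using kassoc[OF len, of 1] n2 by simp
  then have "mul x (K ys) = k (k (x # ys @ replicate (n - 1 - ?l) one) # replicate (n - 1) one)"
    unfolding e1 e2 e3 e4 e5 mul_def K_def by simp
  also have "\<dots> = K (x # ys)" unfolding kone K_def by simp
  finally show ?thesis by simp
qed

lemma K_nil: "K [] = one"
proof -
  have "replicate n one = one # replicate (n - 1) one" using n2 by (cases n) auto
  then show ?thesis unfolding K_def using kone[of one] by simp
qed

lemma K_prd: "length ys \<le> n \<Longrightarrow> K ys = prd ys"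
  by (induction ys) (auto simp: K_nil K_cons prd_def)

lemma k_prd: "length xs = n \<Longrightarrow> k xs = prd xs"
  using K_prd[of xs] by (simp add: K_def)

lemma K_perm: "length xs \<le> n \<Longrightarrow> mset xs = mset ys \<Longrightarrow> K xs = K ys"
  unfolding K_def
  by (rule kcomm) (auto dest: mset_eq_length)

lemma mul_assoc: "mul (mul x y) w = mul x (mul y w)"
proof (cases "n = 2")
  case True
  have l: "length [x,y,w] = 2 * n - 1" using True by simp
  have "k (take 1 [x,y,w] @ [k (take n (drop 1 [x,y,w]))] @ drop (1 + n) [x,y,w])
     = k (k (take n [x,y,w]) # drop n [x,y,w])"
    by (rule kassoc[OF l]) (simp add: True)
  then show ?thesis unfolding mul_def using True by simp
next
  case False
  then have n3: "3 \<le> n" using n2 by simp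
  have a: "\<And>a b. mul a b = K [a, b]"
    unfolding mul_def K_def by (simp add: numeral_2_eq_2)
  have "mul x (mul y w) = mul x (K [y, w])" by (simp only: a)
  also have "\<dots> = K [x,y,w]" by (rule K_cons[symmetric]) (use n3 in simp)
  finally have 1: "mul x (mul y w) = K [x,y,w]" .
  have "mul (mul x y) w = mul w (mul x y)" by (rule mul_comm)
  also have "\<dots> = mul w (K [x, y])" by (simp only: a)
  also have "\<dots> = K [w,x,y]" by (rule K_cons[symmetric]) (use n3 in simp)
  finally have 2: "mul (mul x y) w = K [w,x,y]" .
  have "mset [w,x,y] = mset [x,y,w]" by simp
  then have "K [w,x,y] = K [x,y,w]" by (intro K_perm) (use n3 in simp_all)
  with 1 2 show ?thesis by simp
qed

lemma mul_lcomm: "mul x (mul y w) = mul y (mul x w)"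
  by (metis mul_assoc mul_comm)

lemma one_mul: "mul one x = x" using mul_one mul_comm by metis

lemma prd_append: "prd (xs @ ys) = mul (prd xs) (prd ys)"
  by (induction xs) (auto simp: prd_def one_mul mul_assoc)

lemma pw_add: "pw x (a + b) = mul (pw x a) (pw x b)"
  unfolding pw_def by (simp add: replicate_add prd_append)

lemma pw_Suc: "pw x (Suc j) = mul x (pw x j)" by (simp add: pw_def prd_def)
lemma pw_0: "pw x 0 = one" by (simp add: pw_def prd_def)

lemma pw_mul: "pw (mul a b) j = mul (pw a j) (pw b j)"
  by (induction j) (auto simp: pw_Suc pw_0 mul_one mul_assoc mul_lcomm)

lemma pw_one: "pw one j = one"
  by (induction j) (auto simp: pw_Suc pw_0 mul_one)

lemma pw_prd: "pw (prd xs) j = prd (map (\<lambda>x. pw x j) xs)"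
  by (induction xs) (auto simp: prd_def pw_one pw_mul)


lemma neg_inv: "z \<in> h (x # neg x # replicate (m - 2) z)"
  unfolding neg_of_def by (rule theI'[OF hinv])

lemma neg_uniq: "z \<in> h (x # y # replicate (m - 2) z) \<Longrightarrow> y = neg x"
  unfolding neg_of_def by (rule the1_equality[OF hinv, symmetric])

lemma neg_neg: "neg (neg x) = x"
proof -
  have "h (x # neg x # replicate (m - 2) z) = h (neg x # x # replicate (m - 2) z)"
    by (rule hcomm) (use m2 in auto)
  then have "z \<in> h (neg x # x # replicate (m - 2) z)" using neg_inv[of x] by simp
  then show ?thesis using neg_uniq by metis
qed

lemma mul_z: "mul z a = z"
  unfolding mul_def by (rule kzero) (use n2 in simp)

definition absorb where "absorb I \<longleftrightarrow> (\<forall>a\<in>I. \<forall>y. mul a y \<in> I)"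

lemma prd_in: "absorb I \<Longrightarrow> x \<in> set xs \<Longrightarrow> x \<in> I \<Longrightarrow> prd xs \<in> I"
proof (induction xs)
  case Nil then show ?case by simp
next
  case (Cons a xs)
  show ?case
  proof (cases "x = a")
    case True then show ?thesis using Cons.prems by (simp add: prd_def absorb_def)
  next
    case False
    then have "prd xs \<in> I" using Cons by simp
    then have "mul (prd xs) a \<in> I" using Cons.prems by (simp add: absorb_def)
    then show ?thesis by (simp add: prd_def mul_comm)
  qed
qed

lemma hset_mem: "a \<in> hset h As \<longleftrightarrow> (\<exists>xs. list_all2 (\<in>) xs As \<and> a \<in> h xs)"
  by (auto simp: hset_def)

lemma la_sing: "list_all2 (\<in>) ws (map sing ws)"
  by (induction ws) (auto simp: sing_def)

lemma la_sing_eq: "list_all2 (\<in>) rs (map sing ws) \<Longrightarrow> rs = ws"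
proof -
  assume "list_all2 (\<in>) rs (map sing ws)"
  then have "list_all2 (=) rs ws" by (simp add: list_all2_map2 sing_def)
  then show ?thesis by (simp add: list_all2_eq)
qed

lemma subhyp_intro:
  assumes zI: "z \<in> I"
    and hcl: "\<And>xs. length xs = m \<Longrightarrow> set xs \<subseteq> I \<Longrightarrow> h xs \<subseteq> I"
    and ncl: "\<And>x. x \<in> I \<Longrightarrow> neg x \<in> I"
  shows "subhypergroup m h I"
  unfolding subhypergroup_def
proof (intro conjI allI impI)
  show "I \<noteq> {}" using zI by auto
  show "\<And>xs. length xs = m \<and> set xs \<subseteq> I \<Longrightarrow> h xs \<subseteq> I" using hcl by blast
  fix xs i assume a: "length xs = m - 1 \<and> set xs \<subseteq> I \<and> i < m"
  then have len: "length xs = m - 1" and sub: "set xs \<subseteq> I" and im: "i < m" by auto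
  have ile: "i \<le> length xs" using len im by simp
  define As where "As = map sing (take i xs) @ [I] @ map sing (drop i xs)"
  show "hset h (map sing (take i xs) @ [I] @ map sing (drop i xs)) = I"
    unfolding As_def[symmetric]
  proof
    show "hset h As \<subseteq> I"
    proof
      fix a assume "a \<in> hset h As"
      then obtain ys where ys: "list_all2 (\<in>) ys As" "a \<in> h ys" by (auto simp: hset_mem)
      have AsI: "\<forall>A\<in>set As. A \<subseteq> I" unfolding As_def using sub
        by (auto simp: sing_def dest: in_set_takeD in_set_dropD)
      have lys: "length ys = m" using list_all2_lengthD[OF ys(1)] len im by (simp add: As_def)
      have "set ys \<subseteq> I"
      proof
        fix y assume "y \<in> set ys"
        then obtain j where j: "j < length ys" "ys ! j = y" by (auto simp: in_set_conv_nth)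
        then have "y \<in> As ! j" "j < length As" using ys(1) by (auto simp: list_all2_conv_all_nth)
        then show "y \<in> I" using AsI nth_mem by blast
      qed
      then show "a \<in> I" using hcl lys ys(2) by blast
    qed
  next
    show "I \<subseteq> hset h As"
    proof
      fix a assume aI: "a \<in> I"
      define M where "M = take i (map neg xs) @ a # drop i (map neg xs)"
      have lM: "length M = m" using len im m2 by (simp add: M_def)
      have sM: "set M \<subseteq> I" using sub aI ncl
        by (auto simp: M_def take_map drop_map dest!: in_set_takeD in_set_dropD)
      obtain y where y: "y \<in> h M" using hne[OF lM] by blast
      have yI: "y \<in> I" using hcl[OF lM sM] y by blast
      have Mi: "M ! i = a" using ile by (simp add: M_def nth_append)
      have "map neg M = take i xs @ neg a # drop i xs"
        by (simp add: M_def take_map drop_map neg_neg comp_def)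
      then have "(map neg M)[i := y] = take i xs @ y # drop i xs"
        using ile by (simp add: list_update_append)
      then have ah: "a \<in> h (take i xs @ y # drop i xs)"
        using hrev[OF lM im y] Mi by simp
      have "list_all2 (\<in>) (take i xs @ y # drop i xs) As"
        unfolding As_def using yI
        by (intro list_all2_appendI) (auto simp: la_sing)
      then show "a \<in> hset h As" using ah by (auto simp: hset_mem)
    qed
  qed
qed

lemma hyperideal_iff: "hyperideal m n h k I \<longleftrightarrow> subhypergroup m h I \<and> absorb I"
proof
  assume H: "hyperideal m n h k I"
  have "absorb I" unfolding absorb_def
  proof (intro ballI allI)
    fix a y assume aI: "a \<in> I"
    let ?xs = "a # y # replicate (n - 2) one"
    have "length ?xs = n" using n2 by simp
    moreover have "0 < n" using n2 by simp
    ultimately have "k (?xs[0 := a]) \<in> I" using H aI unfolding hyperideal_def by blast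
    then show "mul a y \<in> I" by (simp add: mul_def)
  qed
  then show "subhypergroup m h I \<and> absorb I" using H by (simp add: hyperideal_def)
next
  assume H: "subhypergroup m h I \<and> absorb I"
  show "hyperideal m n h k I" unfolding hyperideal_def
  proof (intro conjI allI impI)
    show "subhypergroup m h I" using H by simp
    fix xs :: "'a list" and i a assume a: "length xs = n \<and> i < n \<and> a \<in> I"
    then have "k (xs[i := a]) = prd (xs[i := a])" by (simp add: k_prd)
    moreover have "a \<in> set (xs[i := a])" using a by (simp add: set_update_memI)
    ultimately show "k (xs[i := a]) \<in> I" using prd_in H a by simp
  qed
qed

lemma hi_absorb: "hyperideal m n h k I \<Longrightarrow> absorb I" by (simp add: hyperideal_iff)

lemma hi_hcl: "hyperideal m n h k I \<Longrightarrow> length xs = m \<Longrightarrow> set xs \<subseteq> I \<Longrightarrow> h xs \<subseteq> I"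
  by (simp add: hyperideal_def subhypergroup_def)

lemma hi_z: "hyperideal m n h k I \<Longrightarrow> z \<in> I"
proof -
  assume H: "hyperideal m n h k I"
  then obtain a where "a \<in> I" by (auto simp: hyperideal_def subhypergroup_def)
  then have "mul z a \<in> I" using hi_absorb[OF H] by (simp add: absorb_def mul_comm)
  then show ?thesis by (simp add: mul_z)
qed

lemma hi_neg: "hyperideal m n h k I \<Longrightarrow> x \<in> I \<Longrightarrow> neg x \<in> I"
proof -
  assume H: "hyperideal m n h k I" and xI: "x \<in> I"
  have zI: "z \<in> I" using hi_z[OF H] .
  let ?xs = "x # replicate (m - 2) z"
  have "length ?xs = m - 1" using m2 by simp
  moreover have "set ?xs \<subseteq> I" using xI zI by auto
  moreover have "1 < m" using m2 by simp
  ultimately have "hset h (map sing (take 1 ?xs) @ [I] @ map sing (drop 1 ?xs)) = I"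
    using H unfolding hyperideal_def subhypergroup_def by blast
  then have "z \<in> hset h ([sing x] @ [I] @ map sing (replicate (m - 2) z))" using zI by simp
  then obtain ys where ys: "list_all2 (\<in>) ys ([sing x] @ [I] @ map sing (replicate (m - 2) z))"
    "z \<in> h ys" by (auto simp: hset_mem)
  then obtain y rs where "ys = x # y # rs" "y \<in> I" "list_all2 (\<in>) rs (map sing (replicate (m - 2) z))"
    by (auto simp: list_all2_Cons2 sing_def)
  then have "ys = x # y # replicate (m - 2) z" "y \<in> I" using la_sing_eq[of rs "replicate (m - 2) z"] by auto
  then have "y = neg x" using ys(2) neg_uniq by simp
  then show ?thesis using \<open>y \<in> I\<close> by simp
qed

lemma hyperideal_intro:
  assumes "z \<in> I" "\<And>xs. length xs = m \<Longrightarrow> set xs \<subseteq> I \<Longrightarrow> h xs \<subseteq> I"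
    "\<And>x. x \<in> I \<Longrightarrow> neg x \<in> I" "absorb I"
  shows "hyperideal m n h k I"
  using subhyp_intro[OF assms(1-3)] assms(4) by (simp add: hyperideal_iff)


lemma one_notin: "hyperideal m n h k I \<Longrightarrow> I \<noteq> UNIV \<Longrightarrow> one \<notin> I"
proof
  assume H: "hyperideal m n h k I" and ne: "I \<noteq> UNIV" and o: "one \<in> I"
  have "\<And>y. mul one y \<in> I" using hi_absorb[OF H] o by (simp add: absorb_def)
  then have "I = UNIV" by (auto simp: one_mul)
  with ne show False by simp
qed

lemma prd_prime:
  assumes "one \<notin> P" "\<And>a b. mul a b \<in> P \<Longrightarrow> a \<in> P \<or> b \<in> P"
  shows "prd xs \<in> P \<Longrightarrow> \<exists>x\<in>set xs. x \<in> P"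
  using assms by (induction xs) (auto simp: prd_def)

lemma nprime_mul: "n_prime m n h k P \<Longrightarrow> mul a b \<in> P \<Longrightarrow> a \<in> P \<or> b \<in> P"
proof -
  assume P: "n_prime m n h k P" and ab: "mul a b \<in> P"
  let ?L = "a # b # replicate (n - 2) one"
  have "length ?L = n" using n2 by simp
  then obtain i where i: "i < n" "?L ! i \<in> P" using P ab unfolding n_prime_def mul_def by blast
  have o: "one \<notin> P" using P one_notin by (simp add: n_prime_def)
  show ?thesis
  proof (cases i)
    case 0 then show ?thesis using i by simp
  next
    case (Suc j)
    then show ?thesis
    proof (cases j)
      case 0 then show ?thesis using i Suc by simp
    next
      case (Suc l)
      then have "?L ! i = one" using i \<open>i = Suc j\<close> by simp
      then show ?thesis using i o by simp
    qed
  qed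
qed

lemma nprime_prd: "n_prime m n h k P \<Longrightarrow> prd xs \<in> P \<Longrightarrow> \<exists>x\<in>set xs. x \<in> P"
proof -
  assume P: "n_prime m n h k P" and p: "prd xs \<in> P"
  have o: "one \<notin> P" using P one_notin by (simp add: n_prime_def)
  show ?thesis by (rule prd_prime[OF o nprime_mul[OF P] p])
qed

lemma nprime_pw: "n_prime m n h k P \<Longrightarrow> pw x j \<in> P \<Longrightarrow> x \<in> P"
  unfolding pw_def by (drule (1) nprime_prd) auto

lemma nprime_intro:
  assumes H: "hyperideal m n h k P" and o: "one \<notin> P"
    and pr: "\<And>a b. mul a b \<in> P \<Longrightarrow> a \<in> P \<or> b \<in> P"
  shows "n_prime m n h k P"
  unfolding n_prime_def
proof (intro conjI allI impI)
  show "hyperideal m n h k P" by (rule H)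
  show "P \<noteq> UNIV" using o by auto
  fix xs assume a: "length xs = n \<and> k xs \<in> P"
  then have "prd xs \<in> P" using k_prd[of xs] by simp
  then obtain x where "x \<in> set xs" "x \<in> P" using prd_prime[OF o pr] by blast
  then show "\<exists>i<n. xs ! i \<in> P" using a by (auto simp: in_set_conv_nth)
qed

lemma colon_hi:
  assumes H: "hyperideal m n h k P"
  shows "hyperideal m n h k {x. mul x a \<in> P}"
proof (rule hyperideal_intro)
  show "z \<in> {x. mul x a \<in> P}" using hi_z[OF H] by (simp add: mul_z)
  have dist: "\<And>ys. length ys = m \<Longrightarrow> (\<lambda>b. mul b a) ` h ys = h (map (\<lambda>y. mul y a) ys)"
  proof -
    fix ys :: "'a list" assume l: "length ys = m"
    have "length (a # replicate (n - 2) one) = n - 1" using n2 by simp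
    from kdist[OF this l, of 0] n2 show "?thesis ys" by (simp add: mul_def)
  qed
  show "h xs \<subseteq> {x. mul x a \<in> P}" if l: "length xs = m" and s: "set xs \<subseteq> {x. mul x a \<in> P}" for xs
  proof
    fix y assume "y \<in> h xs"
    then have "mul y a \<in> h (map (\<lambda>y. mul y a) xs)" using dist[OF l] by blast
    moreover have "h (map (\<lambda>y. mul y a) xs) \<subseteq> P" using s l by (intro hi_hcl[OF H]) auto
    ultimately show "y \<in> {x. mul x a \<in> P}" by auto
  qed
  show "neg x \<in> {x. mul x a \<in> P}" if x: "x \<in> {x. mul x a \<in> P}" for x
  proof -
    have l: "length (x # neg x # replicate (m - 2) z) = m" using m2 by simp
    have "mul z a \<in> (\<lambda>b. mul b a) ` h (x # neg x # replicate (m - 2) z)" using neg_inv[of x] by blast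
    then have "z \<in> h (mul x a # mul (neg x) a # replicate (m - 2) z)"
      unfolding dist[OF l] by (simp add: mul_z)
    then have "mul (neg x) a = neg (mul x a)" by (rule neg_uniq)
    then show ?thesis using x hi_neg[OF H] by simp
  qed
  show "absorb {x. mul x a \<in> P}"
    unfolding absorb_def
  proof (intro ballI allI)
    fix x y assume "x \<in> {x. mul x a \<in> P}"
    then have "mul (mul x a) y \<in> P" using hi_absorb[OF H] by (simp add: absorb_def)
    then show "mul x y \<in> {x. mul x a \<in> P}" by (simp add: mul_assoc mul_comm[of a y] mul_lcomm)
  qed
qed

lemma inter_hi: "(\<And>P. P \<in> F \<Longrightarrow> hyperideal m n h k P) \<Longrightarrow> hyperideal m n h k (\<Inter>F)"
proof -
  assume H: "\<And>P. P \<in> F \<Longrightarrow> hyperideal m n h k P"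
  show ?thesis
  proof (rule hyperideal_intro)
    show "z \<in> \<Inter>F" using H hi_z by blast
    show "h xs \<subseteq> \<Inter>F" if "length xs = m" "set xs \<subseteq> \<Inter>F" for xs
      using that H hi_hcl by (metis Inf_greatest Inf_lower order_trans)
    show "neg x \<in> \<Inter>F" if "x \<in> \<Inter>F" for x using that H hi_neg by blast
    show "absorb (\<Inter>F)" using H hi_absorb unfolding absorb_def by blast
  qed
qed


lemma krull:
  assumes E: "hyperideal m n h k E" and oS: "one \<in> S"
    and Sm: "\<And>a b. a \<in> S \<Longrightarrow> b \<in> S \<Longrightarrow> mul a b \<in> S"
    and ES: "E \<inter> S = {}"
  shows "\<exists>P. n_prime m n h k P \<and> E \<subseteq> P \<and> P \<inter> S = {}"
proof -
  define A where "A = {I. hyperideal m n h k I \<and> E \<subseteq> I \<and> I \<inter> S = {}}"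
  have EA: "E \<in> A" using E ES by (simp add: A_def)
  have "\<forall>C\<in>chains A. \<exists>U\<in>A. \<forall>X\<in>C. X \<subseteq> U"
  proof
    fix C assume C: "C \<in> chains A"
    show "\<exists>U\<in>A. \<forall>X\<in>C. X \<subseteq> U"
    proof (cases "C = {}")
      case True then show ?thesis using EA by blast
    next
      case False
      have CA: "C \<subseteq> A" and ch: "subset.chain UNIV C"
        using C by (auto simp: chains_def chain_subset_alt_def)
      have Hs: "\<And>I. I \<in> C \<Longrightarrow> hyperideal m n h k I" using CA by (auto simp: A_def)
      have "hyperideal m n h k (\<Union>C)"
      proof (rule hyperideal_intro)
        show "z \<in> \<Union>C" using False Hs hi_z by blast
        show "h xs \<subseteq> \<Union>C" if l: "length xs = m" and s: "set xs \<subseteq> \<Union>C" for xs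
        proof -
          obtain B where "B \<in> C" "set xs \<subseteq> B"
            using finite_subset_Union_chain[OF finite_set s False ch] by blast
          then show ?thesis using hi_hcl[OF Hs l] by blast
        qed
        show "neg x \<in> \<Union>C" if "x \<in> \<Union>C" for x using that Hs hi_neg by blast
        show "absorb (\<Union>C)" using Hs hi_absorb unfolding absorb_def by blast
      qed
      moreover have "E \<subseteq> \<Union>C" "\<Union>C \<inter> S = {}" using CA False by (auto simp: A_def)
      ultimately have "\<Union>C \<in> A" by (simp add: A_def)
      then show ?thesis by blast
    qed
  qed
  then obtain M where MA: "M \<in> A" and max: "\<forall>X\<in>A. M \<subseteq> X \<longrightarrow> X = M"
    using Zorn_Lemma2[of A] by blast
  have HM: "hyperideal m n h k M" and EM: "E \<subseteq> M" and MS: "M \<inter> S = {}"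
    using MA by (auto simp: A_def)
  have oM: "one \<notin> M" using oS MS by blast
  have colon_meets: "\<exists>s\<in>S. mul s c \<in> M" if cM: "c \<notin> M" "d \<notin> M" "mul d c \<in> M" for c d
  proof (rule ccontr)
    assume "\<not> (\<exists>s\<in>S. mul s c \<in> M)"
    then have dis: "{x. mul x c \<in> M} \<inter> S = {}" by blast
    have sub: "M \<subseteq> {x. mul x c \<in> M}" using hi_absorb[OF HM] by (auto simp: absorb_def)
    have "{x. mul x c \<in> M} \<in> A" using colon_hi[OF HM] dis sub EM by (auto simp: A_def)
    then have "{x. mul x c \<in> M} = M" using max sub by blast
    then show False using cM by blast
  qed
  have "n_prime m n h k M"
  proof (rule nprime_intro[OF HM oM])
    fix a b assume ab: "mul a b \<in> M"
    show "a \<in> M \<or> b \<in> M"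
    proof (rule ccontr)
      assume "\<not> (a \<in> M \<or> b \<in> M)"
      then have a: "a \<notin> M" and b: "b \<notin> M" by auto
      obtain s where s: "s \<in> S" "mul s a \<in> M" using colon_meets[OF a b] ab by (metis mul_comm)
      have sM: "s \<notin> M" using s MS by blast
      obtain t where t: "t \<in> S" "mul t s \<in> M"
        using colon_meets[OF sM a] s by (metis mul_comm)
      have "mul t s \<in> S" using Sm t s by blast
      then show False using t MS by blast
    qed
  qed
  then show ?thesis using EM MS by blast
qed


end

lemma endo_mul:
  assumes "km m n h k z one" "endomorphism m n h k one \<theta>"
  shows "\<theta> (km.mul n k one x y) = km.mul n k one (\<theta> x) (\<theta> y)"
proof -
  interpret km m n h k z one by fact
  have "\<theta> (mul x y) = k (map \<theta> (x # y # replicate (n - 2) one))"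
    using assms(2) n2 unfolding endomorphism_def mul_def by simp
  also have "\<dots> = mul (\<theta> x) (\<theta> y)" using assms(2) by (simp add: endomorphism_def mul_def)
  finally show ?thesis .
qed

lemma endo_pw:
  assumes "km m n h k z one" "endomorphism m n h k one \<theta>"
  shows "\<theta> (km.pw n k one x j) = km.pw n k one (\<theta> x) j"
proof -
  interpret km m n h k z one by fact
  show ?thesis
    by (induction j) (auto simp: pw_0 pw_Suc endo_mul[OF assms] assms(2)[unfolded endomorphism_def])
qed

theorem mainTheorem16:
  fixes h :: "'a list \<Rightarrow> 'a set" and k :: "'a list \<Rightarrow> 'a"
    and z one :: 'a and \<theta> :: "'a \<Rightarrow> 'a" and E :: "'a set" and m n :: nat
  assumes "krasner_hyperring m n h k z one"
    and "endomorphism m n h k one \<theta>"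
    and "endo_primary m n h k one \<theta> E"
  shows "endo_prime m n h k one \<theta> (rad m n h k E)"
proof -
  interpret km m n h k z one by (rule km.intro) fact
  have KM: "km m n h k z one" by (rule km.intro) fact
  have th_k: "\<And>xs. length xs = n \<Longrightarrow> \<theta> (k xs) = k (map \<theta> xs)"
    and th_one: "\<theta> one = one" using assms(2) by (auto simp: endomorphism_def)
  have HE: "hyperideal m n h k E" and EU: "E \<noteq> UNIV"
    and EP: "\<And>xs. length xs = n \<Longrightarrow> k xs \<in> E \<Longrightarrow>
        \<exists>i<n. xs ! i \<in> E \<or> \<theta> (k (xs[i := one])) \<in> rad m n h k E"
    using assms(3) unfolding endo_primary_def by blast+
  define F where "F = {P. n_prime m n h k P \<and> E \<subseteq> P}"
  have R: "rad m n h k E = \<Inter>F" by (simp add: rad_def F_def)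
  have HR: "hyperideal m n h k (\<Inter>F)"
    by (rule inter_hi) (auto simp: F_def n_prime_def)
  have oE: "one \<notin> E" using one_notin[OF HE EU] .
  have s1: "one \<in> {one}" by simp
  have s2: "\<And>a b. a \<in> {one} \<Longrightarrow> b \<in> {one} \<Longrightarrow> mul a b \<in> {one}" by (simp add: mul_one)
  have s3: "E \<inter> {one} = {}" using oE by auto
  obtain P0 where P0: "n_prime m n h k P0" "E \<subseteq> P0" "P0 \<inter> {one} = {}"
    using krull[OF HE s1 s2 s3] by blast
  have RU: "\<Inter>F \<noteq> UNIV" using P0 by (auto simp: F_def)
  have cond: "\<exists>i<n. xs ! i \<in> \<Inter>F \<or> \<theta> (k (xs[i := one])) \<in> \<Inter>F"
    if xs: "length xs = n" "k xs \<in> \<Inter>F" for xs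
  proof -
    define c where "c = k xs"
    have c_prd: "c = prd xs" using xs k_prd c_def by simp
    have "\<exists>j. pw c j \<in> E"
    proof (rule ccontr)
      assume "\<not> (\<exists>j. pw c j \<in> E)"
      then have dis: "E \<inter> range (pw c) = {}" by auto
      have r1: "one \<in> range (pw c)" using pw_0[of c] by (metis rangeI)
      have r2: "mul a b \<in> range (pw c)" if ra: "a \<in> range (pw c)" "b \<in> range (pw c)" for a b
      proof -
        obtain a' b' where "a = pw c a'" "b = pw c b'" using ra by blast
        then have "mul a b = pw c (a' + b')" by (simp only: pw_add)
        then show ?thesis by simp
      qed
      obtain P where P: "n_prime m n h k P" "E \<subseteq> P" "P \<inter> range (pw c) = {}"
        using krull[OF HE r1 r2 dis] by blast
      have "P \<in> F" using P by (simp add: F_def)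
      then have "c \<in> P" using xs(2) c_def by blast
      moreover have "pw c 1 = c" by (simp add: pw_Suc pw_0 mul_one)
      ultimately show False using P(3) by (metis IntI empty_iff rangeI)
    qed
    then obtain j where j: "pw c j \<in> E" by blast
    define ys where "ys = map (\<lambda>x. pw x j) xs"
    have lys: "length ys = n" using xs by (simp add: ys_def)
    have "k ys = pw c j" using lys by (simp add: k_prd ys_def c_prd pw_prd)
    then obtain i where i: "i < n" "ys ! i \<in> E \<or> \<theta> (k (ys[i := one])) \<in> rad m n h k E"
      using EP[OF lys] j by auto
    show ?thesis
    proof (cases "ys ! i \<in> E")
      case True
      have "xs ! i \<in> \<Inter>F"
      proof
        fix P assume "P \<in> F"
        then have "n_prime m n h k P" "E \<subseteq> P" by (auto simp: F_def)
        moreover have "ys ! i = pw (xs ! i) j" using i xs by (simp add: ys_def)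
        ultimately show "xs ! i \<in> P" using True nprime_pw by (metis subsetD)
      qed
      then show ?thesis using i by blast
    next
      case False
      then have T: "\<theta> (k (ys[i := one])) \<in> \<Inter>F" using i R by simp
      have "\<theta> (k (xs[i := one])) \<in> \<Inter>F"
      proof
        fix P assume PF: "P \<in> F"
        then have P: "n_prime m n h k P" "E \<subseteq> P" by (auto simp: F_def)
        have oP: "one \<notin> P" using P one_notin by (simp add: n_prime_def)
        have "\<theta> (k (ys[i := one])) \<in> P" using T PF by blast
        moreover have "\<theta> (k (ys[i := one])) = k (map \<theta> (ys[i := one]))"
          using lys by (intro th_k) simp
        moreover have "k (map \<theta> (ys[i := one])) = prd (map \<theta> (ys[i := one]))"
          using lys by (intro k_prd) simp
        ultimately have "prd (map \<theta> (ys[i := one])) \<in> P" by simp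
        then obtain w where w: "w \<in> set (map \<theta> (ys[i := one]))" "w \<in> P"
          using nprime_prd[OF P(1)] by blast
        then obtain l where l: "l < n" "w = \<theta> ((ys[i := one]) ! l)"
          using lys by (auto simp: in_set_conv_nth)
        have li: "l \<noteq> i"
        proof
          assume "l = i"
          then have "w = one" using l lys th_one by simp
          then show False using w oP by simp
        qed
        then have "(ys[i := one]) ! l = pw (xs ! l) j" using l xs by (simp add: ys_def)
        then have "w = pw (\<theta> (xs ! l)) j" using l by (simp add: endo_pw[OF KM assms(2)])
        then have tl: "\<theta> (xs ! l) \<in> P" using w nprime_pw[OF P(1)] by simp
        have "(map \<theta> (xs[i := one])) ! l = \<theta> (xs ! l)" using li l xs by simp
        moreover have "l < length (map \<theta> (xs[i := one]))" using l xs by simp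
        ultimately have "\<theta> (xs ! l) \<in> set (map \<theta> (xs[i := one]))" by (metis nth_mem)
        moreover have "absorb P" using P(1) hi_absorb by (simp add: n_prime_def)
        ultimately have "prd (map \<theta> (xs[i := one])) \<in> P"
          using prd_in tl by blast
        moreover have "\<theta> (k (xs[i := one])) = k (map \<theta> (xs[i := one]))"
          using xs by (intro th_k) simp
        moreover have "k (map \<theta> (xs[i := one])) = prd (map \<theta> (xs[i := one]))"
          using xs by (intro k_prd) simp
        ultimately show "\<theta> (k (xs[i := one])) \<in> P" by simp
      qed
      then show ?thesis using i by blast
    qed
  qed
  show ?thesis unfolding endo_prime_def R using HR RU cond by blast
qed

end
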